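(* There is an infinite family of undirected graphs (with unit edge lengths) such that, with $n$ the number of vertices, the minimum size of a hierarchical hub labeling is $\Omega(\sqrt n)$ times larger than the minimum size of a hub labeling.
   Context: A hub labeling of an undirected graph $G=(V,E)$, $n=|V|$, assigns to each vertex $v$ a set $L(v)\subseteq V$ such that for every pair $u,w$ (including $u=w$), $L(u)\cap L(w)$ contains a vertex on some shortest $u$–$w$ path; its size is $\sum_v|L(v)|$. It is hierarchical if there is a bijection $\pi:V\to\{1,\dots,n\}$ such that $u\in L(v)$ implies $\pi(u)\le\pi(v)$. *)

theory Defs
  imports Complex_Main
begin

text \<open>An undirected graph with unit edge lengths: finite vertex set V and a symmetric,
irreflexive adjacency relation E (only edges inside V matter).\<close>

definition undirected_graph :: "'a set \<Rightarrow> ('a \<Rightarrow> 'a \<Rightarrow> bool) \<Rightarrow> bool" where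
  "undirected_graph V E \<longleftrightarrow> finite V \<and> (\<forall>u v. E u v \<longrightarrow> E v u) \<and> (\<forall>v. \<not> E v v)"

text \<open>A path from u to w: a nonempty list of distinct vertices of V, consecutive ones adjacent.
Its length (number of edges, unit edge lengths) is length p - 1.\<close>

definition is_path :: "'a set \<Rightarrow> ('a \<Rightarrow> 'a \<Rightarrow> bool) \<Rightarrow> 'a \<Rightarrow> 'a \<Rightarrow> 'a list \<Rightarrow> bool" where
  "is_path V E u w p \<longleftrightarrow> p \<noteq> [] \<and> set p \<subseteq> V \<and> distinct p \<and> hd p = u \<and> last p = w \<and>
     (\<forall>i. Suc i < length p \<longrightarrow> E (p ! i) (p ! Suc i))"

definition shortest_path :: "'a set \<Rightarrow> ('a \<Rightarrow> 'a \<Rightarrow> bool) \<Rightarrow> 'a \<Rightarrow> 'a \<Rightarrow> 'a list \<Rightarrow> bool" where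
  "shortest_path V E u w p \<longleftrightarrow> is_path V E u w p \<and>
     (\<forall>q. is_path V E u w q \<longrightarrow> length p \<le> length q)"

definition connected_graph :: "'a set \<Rightarrow> ('a \<Rightarrow> 'a \<Rightarrow> bool) \<Rightarrow> bool" where
  "connected_graph V E \<longleftrightarrow> (\<forall>u\<in>V. \<forall>w\<in>V. \<exists>p. is_path V E u w p)"

definition hub_labeling :: "'a set \<Rightarrow> ('a \<Rightarrow> 'a \<Rightarrow> bool) \<Rightarrow> ('a \<Rightarrow> 'a set) \<Rightarrow> bool" where
  "hub_labeling V E L \<longleftrightarrow> (\<forall>v\<in>V. L v \<subseteq> V) \<and>
     (\<forall>u\<in>V. \<forall>w\<in>V. \<exists>x \<in> L u \<inter> L w. \<exists>p. shortest_path V E u w p \<and> x \<in> set p)"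

definition hl_size :: "'a set \<Rightarrow> ('a \<Rightarrow> 'a set) \<Rightarrow> nat" where
  "hl_size V L = (\<Sum>v\<in>V. card (L v))"

definition hierarchical :: "'a set \<Rightarrow> ('a \<Rightarrow> 'a set) \<Rightarrow> bool" where
  "hierarchical V L \<longleftrightarrow> (\<exists>\<pi>. bij_betw \<pi> V {1..card V} \<and> (\<forall>v\<in>V. \<forall>u\<in>L v. \<pi> u \<le> \<pi> v))"

definition min_hl_size :: "'a set \<Rightarrow> ('a \<Rightarrow> 'a \<Rightarrow> bool) \<Rightarrow> nat" where
  "min_hl_size V E = (LEAST s. \<exists>L. hub_labeling V E L \<and> hl_size V L = s)"

definition min_hhl_size :: "'a set \<Rightarrow> ('a \<Rightarrow> 'a \<Rightarrow> bool) \<Rightarrow> nat" where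
  "min_hhl_size V E = (LEAST s. \<exists>L. hub_labeling V E L \<and> hierarchical V L \<and> hl_size V L = s)"

end

theory Submission imports Defs begin

definition rk :: "nat \<Rightarrow> nat \<Rightarrow> nat \<Rightarrow> bool" where
  "rk k u v \<longleftrightarrow> u \<noteq> v \<and> (u div k = v div k \<or> u mod k = v mod k)"

definition cor :: "nat \<Rightarrow> nat \<Rightarrow> nat \<Rightarrow> nat" where
  "cor k u w = (u div k) * k + w mod k"

lemma cor_div: "0 < k \<Longrightarrow> cor k u w div k = u div k"
  by (simp add: cor_def)

lemma cor_mod: "0 < k \<Longrightarrow> cor k u w mod k = w mod k"
  by (simp add: cor_def)

lemma cor_lt: assumes "0 < k" "u < k*k" shows "cor k u w < k*k"
proof -
  have "u div k < k" using assms by (simp add: less_mult_imp_div_less)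
  hence "u div k + 1 \<le> k" by simp
  hence "(u div k + 1) * k \<le> k * k" by (rule mult_le_mono1)
  hence "u div k * k + k \<le> k * k" by (simp add: algebra_simps)
  moreover have "w mod k < k" using assms by simp
  ultimately show ?thesis unfolding cor_def by linarith
qed

lemma eq_coords: "x div k = y div k \<Longrightarrow> x mod k = y mod k \<Longrightarrow> x = (y::nat)"
proof -
  assume a: "x div k = y div k" and b: "x mod k = y mod k"
  have "x = x div k * k + x mod k" by simp
  also have "\<dots> = y div k * k + y mod k" using a b by simp
  also have "\<dots> = y" by simp
  finally show ?thesis .
qed

lemma path_len1: "is_path V E u w p \<Longrightarrow> length p = 1 \<Longrightarrow> u = w"
  unfolding is_path_def by (cases p) auto

lemma path_len2: assumes "is_path V E u w p" "length p = 2" shows "E u w"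
proof -
  have "\<exists>a b. p = [a,b]" using assms(2) by (auto simp: length_Suc_conv numeral_2_eq_2)
  then obtain a b where p: "p = [a,b]" by blast
  show ?thesis using assms(1) unfolding is_path_def p by force
qed

lemma path_len3: assumes "is_path V E u w p" "length p = 3"
  shows "\<exists>c. p = [u,c,w] \<and> E u c \<and> E c w"
proof -
  have "\<exists>a b c. p = [a,b,c]" using assms(2) by (auto simp: length_Suc_conv numeral_3_eq_3)
  then obtain a b c where p: "p = [a,b,c]" by blast
  have "E (p!0) (p!Suc 0)" "E (p!1) (p!Suc 1)" using assms(1) unfolding is_path_def p by auto
  then show ?thesis using assms(1) unfolding is_path_def p by auto
qed

lemma rk_sym: "rk k u v \<Longrightarrow> rk k v u" unfolding rk_def by auto

lemma path3: assumes k: "0 < k" and x: "x < k*k" "y < k*k" "x div k \<noteq> y div k" "x mod k \<noteq> y mod k"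
  shows "is_path {0..<k*k} (rk k) x y [x, cor k x y, y]"
proof -
  have c: "cor k x y < k*k" using cor_lt k x by blast
  have d: "x \<noteq> cor k x y" using cor_mod[OF k, of x y] x(4) by metis
  have d2: "cor k x y \<noteq> y" using cor_div[OF k, of x y] x(3) by metis
  have r: "rk k x (cor k x y)" "rk k (cor k x y) y" using x k d d2 unfolding rk_def
    by (auto simp: cor_div cor_mod)
  have d3: "x \<noteq> y" using x(3) by metis
  have E: "\<forall>i. Suc i < length [x, cor k x y, y] \<longrightarrow> rk k ([x, cor k x y, y] ! i) ([x, cor k x y, y] ! Suc i)"
  proof (intro allI impI)
    fix i assume "Suc i < length [x, cor k x y, y]"
    hence "i = 0 \<or> i = 1" by auto
    thus "rk k ([x, cor k x y, y] ! i) ([x, cor k x y, y] ! Suc i)" using r by auto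
  qed
  show ?thesis unfolding is_path_def using E c x d d2 d3 by auto
qed

lemma sp3: assumes k: "0 < k" and x: "x < k*k" "y < k*k" "x div k \<noteq> y div k" "x mod k \<noteq> y mod k"
  and sp: "shortest_path {0..<k*k} (rk k) x y p"
  shows "\<exists>c. p = [x,c,y] \<and> rk k x c \<and> rk k c y"
proof -
  have ip: "is_path {0..<k*k} (rk k) x y p" using sp unfolding shortest_path_def by auto
  have "length p \<le> 3" using sp path3[OF k x] unfolding shortest_path_def by fastforce
  moreover have "length p \<noteq> 0" using ip unfolding is_path_def by auto
  moreover have "length p \<noteq> 1" using path_len1[OF ip] x by auto
  moreover have "length p \<noteq> 2" using path_len2[OF ip] x unfolding rk_def by auto
  ultimately have "length p = 3" by linarith
  thus ?thesis using path_len3[OF ip] by auto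
qed

lemma corner_char: assumes k: "0 < k" and "rk k u c" "rk k c w" "u div k \<noteq> w div k" "u mod k \<noteq> w mod k"
  shows "c = cor k u w \<or> c = cor k w u"
proof (cases "c div k = u div k")
  case True
  hence "c mod k = w mod k" using assms(3,4) unfolding rk_def by auto
  hence "c = cor k u w" using True eq_coords cor_div[OF k] cor_mod[OF k] by metis
  thus ?thesis by simp
next
  case False
  hence "c mod k = u mod k" using assms(2) unfolding rk_def by auto
  hence "c div k = w div k" using assms(3,5) unfolding rk_def by auto
  hence "c = cor k w u" using \<open>c mod k = u mod k\<close> eq_coords cor_div[OF k] cor_mod[OF k] by metis
  thus ?thesis by simp
qed

lemma forced:
  assumes k: "0 < k" and hl: "hub_labeling {0..<k*k} (rk k) L"
    and hier: "\<forall>v\<in>{0..<k*k}. \<forall>u\<in>L v. (\<pi>::nat\<Rightarrow>nat) u \<le> \<pi> v"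
    and x: "x < k*k" "y < k*k" "x div k \<noteq> y div k" "x mod k \<noteq> y mod k"
    and lt: "\<pi> y < \<pi> x" "\<pi> y < \<pi> (cor k x y)" "\<pi> y < \<pi> (cor k y x)"
  shows "y \<in> L x"
proof -
  obtain h p where h: "h \<in> L x" "h \<in> L y" and sp: "shortest_path {0..<k*k} (rk k) x y p"
    and hp: "h \<in> set p" using hl x unfolding hub_labeling_def by fastforce
  obtain c where c: "p = [x,c,y]" "rk k x c" "rk k c y" using sp3[OF k x sp] by blast
  have cc: "c = cor k x y \<or> c = cor k y x" using corner_char[OF k c(2,3) x(3,4)] .
  have "\<pi> h \<le> \<pi> y" using hier h(2) x(2) by auto
  moreover have "h = x \<or> h = c \<or> h = y" using hp c by auto
  ultimately have "h = y" using cc lt by (elim disjE) auto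
  thus ?thesis using h by simp
qed

lemma cor_adj: assumes k: "0 < k" and x: "x div k \<noteq> y div k" "x mod k \<noteq> y mod k"
  shows "rk k x (cor k x y)" "rk k (cor k x y) y"
proof -
  have d: "x \<noteq> cor k x y" using cor_mod[OF k, of x y] x(2) by metis
  have d2: "cor k x y \<noteq> y" using cor_div[OF k, of x y] x(1) by metis
  show "rk k x (cor k x y)" "rk k (cor k x y) y" using x k d d2 unfolding rk_def
    by (auto simp: cor_div cor_mod)
qed

lemma ex_shortest: "is_path V E u w p \<Longrightarrow> \<exists>q. shortest_path V E u w q"
proof -
  assume "is_path V E u w p"
  then obtain q where "is_path V E u w q \<and> (\<forall>r. is_path V E u w r \<longrightarrow> length q \<le> length r)"
    using ex_has_least_nat[of "is_path V E u w" p length] by blast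
  thus ?thesis unfolding shortest_path_def by blast
qed

lemma sp_1: "u \<in> V \<Longrightarrow> shortest_path V E u u [u]"
  unfolding shortest_path_def is_path_def by (auto simp: Suc_le_eq)

lemma sp_2: assumes "u \<in> V" "w \<in> V" "u \<noteq> w" "E u w" shows "shortest_path V E u w [u,w]"
proof -
  have "is_path V E u w [u,w]" using assms unfolding is_path_def by (auto simp: less_Suc_eq)
  moreover have "Suc (Suc 0) \<le> length q" if "is_path V E u w q" for q
  proof -
    have "length q \<noteq> 0" using that unfolding is_path_def by auto
    moreover have "length q \<noteq> 1" using path_len1[OF that] assms(3) by auto
    ultimately show ?thesis by linarith
  qed
  ultimately show ?thesis unfolding shortest_path_def by auto
qed

lemma sp_3: assumes k: "0 < k" and x: "x < k*k" "y < k*k" "x div k \<noteq> y div k" "x mod k \<noteq> y mod k"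
  shows "shortest_path {0..<k*k} (rk k) x y [x, cor k x y, y]"
proof -
  have "Suc (Suc (Suc 0)) \<le> length q" if ip: "is_path {0..<k*k} (rk k) x y q" for q
  proof -
    have "length q \<noteq> 0" using ip unfolding is_path_def by auto
    moreover have "length q \<noteq> 1" using path_len1[OF ip] x by auto
    moreover have "length q \<noteq> 2" using path_len2[OF ip] x unfolding rk_def by auto
    ultimately show ?thesis by linarith
  qed
  thus ?thesis using path3[OF k x] unfolding shortest_path_def by auto
qed

lemma rk_cases: "\<not> rk k u w \<Longrightarrow> u \<noteq> w \<Longrightarrow> u div k \<noteq> w div k \<and> u mod k \<noteq> w mod k"
  unfolding rk_def by auto

lemma rook_conn: assumes k: "0 < k" and u: "u < k*k" "w < k*k"
  shows "\<exists>p. is_path {0..<k*k} (rk k) u w p"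
proof (cases "u = w")
  case True
  then show ?thesis using sp_1[of u "{0..<k*k}" "rk k"] u unfolding shortest_path_def by auto
next
  case False
  show ?thesis
  proof (cases "rk k u w")
    case True
    then show ?thesis using sp_2[of u "{0..<k*k}" w "rk k"] u False unfolding shortest_path_def by auto
  next
    case nr: False
    show ?thesis using path3[OF k u] rk_cases[OF nr False] by blast
  qed
qed

definition L0 :: "nat \<Rightarrow> nat \<Rightarrow> nat set" where
  "L0 k v = {x \<in> {0..<k*k}. x = v \<or> rk k v x}"

lemma L0_hub: assumes k: "0 < k" shows "hub_labeling {0..<k*k} (rk k) (L0 k)"
  unfolding hub_labeling_def
proof (intro conjI ballI)
  fix v assume "v \<in> {0..<k*k}" thus "L0 k v \<subseteq> {0..<k*k}" unfolding L0_def by auto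
next
  fix u w assume u: "u \<in> {0..<k*k}" and w: "w \<in> {0..<k*k}"
  show "\<exists>x\<in>L0 k u \<inter> L0 k w. \<exists>p. shortest_path {0..<k*k} (rk k) u w p \<and> x \<in> set p"
  proof (cases "u = w")
    case True
    have "u \<in> L0 k u \<inter> L0 k w" using True u unfolding L0_def by auto
    moreover have "shortest_path {0..<k*k} (rk k) u w [u]" using sp_1[OF u, of "rk k"] True by simp
    ultimately show ?thesis by (intro bexI[of _ u] exI[of _ "[u]"]) auto
  next
    case False
    show ?thesis
    proof (cases "rk k u w")
      case True
      have "w \<in> L0 k u \<inter> L0 k w" using True w unfolding L0_def by auto
      moreover have "shortest_path {0..<k*k} (rk k) u w [u,w]" using sp_2[of u "{0..<k*k}" w "rk k", OF u w False True] .
      ultimately show ?thesis by (intro bexI[of _ w] exI[of _ "[u,w]"]) auto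
    next
      case nr: False
      have d: "u div k \<noteq> w div k" "u mod k \<noteq> w mod k" using rk_cases[OF nr False] by auto
      have c: "cor k u w < k*k" using cor_lt[OF k] u by auto
      have "rk k u (cor k u w)" "rk k w (cor k u w)" using cor_adj[OF k d] rk_sym by auto
      hence "cor k u w \<in> L0 k u \<inter> L0 k w" using c unfolding L0_def by auto
      moreover have "shortest_path {0..<k*k} (rk k) u w [u, cor k u w, w]"
        using sp_3[OF k _ _ d] u w by auto
      ultimately show ?thesis by (intro bexI[of _ "cor k u w"] exI[of _ "[u, cor k u w, w]"]) auto
    qed
  qed
qed

lemma L0_card: assumes k: "0 < k" shows "card (L0 k v) \<le> 2*k"
proof -
  let ?A = "(\<lambda>j. (v div k)*k + j) ` {..<k}"
  let ?B = "(\<lambda>i. i*k + v mod k) ` {..<k}"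
  have "L0 k v \<subseteq> ?A \<union> ?B"
  proof
    fix x assume x: "x \<in> L0 k v"
    have xe: "x = (x div k)*k + x mod k" by simp
    have "x < k*k" using x unfolding L0_def by auto
    hence xd: "x div k < k" using k by (simp add: less_mult_imp_div_less)
    have xm: "x mod k < k" using k by simp
    show "x \<in> ?A \<union> ?B"
    proof (cases "x div k = v div k")
      case True
      then show ?thesis using xe xm by (metis UnI1 image_eqI lessThan_iff)
    next
      case False
      hence "x mod k = v mod k" using x unfolding L0_def rk_def by auto
      then show ?thesis using xe xd by (metis UnI2 image_eqI lessThan_iff)
    qed
  qed
  hence "card (L0 k v) \<le> card (?A \<union> ?B)" by (intro card_mono) auto
  also have "\<dots> \<le> card ?A + card ?B" by (rule card_Un_le)
  also have "\<dots> \<le> k + k" using card_image_le[of "{..<k}"] by (metis add_mono card_lessThan finite_lessThan)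
  finally show ?thesis by simp
qed

lemma min_hl_upper: assumes k: "0 < k" shows "min_hl_size {0..<k*k} (rk k) \<le> k*k*(2*k)"
proof -
  have "hl_size {0..<k*k} (L0 k) \<le> card {0..<k*k} * (2*k)"
    unfolding hl_size_def using sum_bounded_above[of "{0..<k*k}" "\<lambda>v. card (L0 k v)" "2*k"] L0_card[OF k] by simp
  hence h: "hl_size {0..<k*k} (L0 k) \<le> k*k*(2*k)" by simp
  have "min_hl_size {0..<k*k} (rk k) \<le> hl_size {0..<k*k} (L0 k)"
    unfolding min_hl_size_def by (rule Least_le) (use L0_hub[OF k] in auto)
  thus ?thesis using h by linarith
qed

definition L1 :: "nat \<Rightarrow> nat \<Rightarrow> nat set" where
  "L1 n v = {x \<in> {0..<n}. x \<le> v}"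

lemma hhl_exists: assumes k: "0 < k"
  shows "\<exists>L. hub_labeling {0..<k*k} (rk k) L \<and> hierarchical {0..<k*k} L"
proof (intro exI conjI)
  show "hub_labeling {0..<k*k} (rk k) (L1 (k*k))"
    unfolding hub_labeling_def
  proof (intro conjI ballI)
    fix v assume "v \<in> {0..<k*k}" thus "L1 (k*k) v \<subseteq> {0..<k*k}" unfolding L1_def by auto
  next
    fix u w assume u: "u \<in> {0..<k*k}" and w: "w \<in> {0..<k*k}"
    obtain p0 where "is_path {0..<k*k} (rk k) u w p0" using rook_conn[OF k] u w by auto
    hence "\<exists>q. shortest_path {0..<k*k} (rk k) u w q" by (rule ex_shortest)
    then obtain p where p: "shortest_path {0..<k*k} (rk k) u w p" by blast
    hence pp: "p \<noteq> []" "hd p = u" "last p = w" unfolding shortest_path_def is_path_def by auto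
    show "\<exists>x\<in>L1 (k*k) u \<inter> L1 (k*k) w. \<exists>p. shortest_path {0..<k*k} (rk k) u w p \<and> x \<in> set p"
    proof (cases "u \<le> w")
      case True
      hence "u \<in> L1 (k*k) u \<inter> L1 (k*k) w" using u unfolding L1_def by auto
      moreover have "u \<in> set p" using pp hd_in_set by metis
      ultimately show ?thesis using p by blast
    next
      case False
      hence "w \<in> L1 (k*k) u \<inter> L1 (k*k) w" using w unfolding L1_def by auto
      moreover have "w \<in> set p" using pp last_in_set by metis
      ultimately show ?thesis using p by blast
    qed
  qed
  have b: "bij_betw Suc {0..<k*k} {1..card {0..<k*k}}"
    by (simp add: bij_betw_def image_Suc_atLeastLessThan atLeastLessThanSuc_atLeastAtMost)
  show "hierarchical {0..<k*k} (L1 (k*k))"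
    unfolding hierarchical_def using b unfolding L1_def by (intro exI[of _ Suc]) auto
qed

lemma enc_div: "b < (k::nat) \<Longrightarrow> (a*k+b) div k = a" by simp
lemma enc_mod: "b < (k::nat) \<Longrightarrow> (a*k+b) mod k = b" by simp
lemma enc_lt: assumes "a < (k::nat)" "b < k" shows "a*k+b < k*k"
proof -
  have "a + 1 \<le> k" using assms by simp
  hence "(a + 1) * k \<le> k * k" by (rule mult_le_mono1)
  thus ?thesis using assms by (simp add: algebra_simps)
qed

lemma cor_cor1: "0 < k \<Longrightarrow> cor k (cor k x y) (cor k y x) = x"
  by (simp add: cor_def)
lemma cor_cor2: "0 < k \<Longrightarrow> cor k (cor k y x) (cor k x y) = y"
  by (simp add: cor_def)

lemma hhl_lower:
  assumes k: "2 \<le> k" and hl: "hub_labeling {0..<k*k} (rk k) L" and hi: "hierarchical {0..<k*k} L"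
  shows "(k*(k-1))^2 \<le> 4 * hl_size {0..<k*k} L"
proof -
  have k0: "0 < k" using k by simp
  define V where "V = {0..<k*k}"
  obtain \<pi> where bij: "bij_betw \<pi> V {1..card V}" and hier: "\<forall>v\<in>V. \<forall>u\<in>L v. \<pi> u \<le> \<pi> v"
    using hi unfolding hierarchical_def V_def by blast
  have inj: "inj_on \<pi> V" using bij bij_betw_imp_inj_on by blast
  define Q where "Q = {(x,y). x < k*k \<and> y < k*k \<and> x div k \<noteq> y div k \<and> x mod k \<noteq> y mod k \<and>
      \<pi> y < \<pi> x \<and> \<pi> y < \<pi> (cor k x y) \<and> \<pi> y < \<pi> (cor k y x)}"
  define P where "P = {(x,y). x < k*k \<and> y < k*k \<and> x div k \<noteq> y div k \<and> x mod k \<noteq> y mod k}"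
  define sw :: "nat \<times> nat \<Rightarrow> nat \<times> nat" where "sw = (\<lambda>(x,y). (y,x))"
  define dg :: "nat \<times> nat \<Rightarrow> nat \<times> nat" where "dg = (\<lambda>(x,y). (cor k x y, cor k y x))"
  have LV: "\<forall>v\<in>V. L v \<subseteq> V" using hl unfolding hub_labeling_def V_def by auto
  have QS: "Q \<subseteq> Sigma V L"
  proof
    fix z assume "z \<in> Q"
    then obtain x y where z: "z = (x,y)" and xy: "x < k*k" "y < k*k" "x div k \<noteq> y div k" "x mod k \<noteq> y mod k"
      "\<pi> y < \<pi> x" "\<pi> y < \<pi> (cor k x y)" "\<pi> y < \<pi> (cor k y x)" unfolding Q_def by auto
    have "y \<in> L x" using forced[OF k0 hl _ xy] hier unfolding V_def by blast
    thus "z \<in> Sigma V L" using z xy unfolding V_def by auto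
  qed
  have finL: "\<forall>v\<in>V. finite (L v)" using LV unfolding V_def by (meson finite_atLeastLessThan finite_subset)
  have finS: "finite (Sigma V L)" using finL unfolding V_def
    by (intro finite_SigmaI) auto
  have "card (Sigma V L) = hl_size {0..<k*k} L"
    unfolding hl_size_def V_def[symmetric] using finL
    by (intro card_SigmaI) (auto simp: V_def)
  hence cQ: "card Q \<le> hl_size {0..<k*k} L" using card_mono[OF finS QS] by simp
  have finQ: "finite Q" using finite_subset[OF QS finS] .
  have PQ: "P \<subseteq> Q \<union> sw ` Q \<union> dg ` Q \<union> (sw \<circ> dg) ` Q"
  proof
    fix z assume "z \<in> P"
    then obtain x y where z: "z = (x,y)" and xy: "x < k*k" "y < k*k" "x div k \<noteq> y div k" "x mod k \<noteq> y mod k"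
      unfolding P_def by auto
    define a where "a = cor k x y"
    define b where "b = cor k y x"
    have ad: "a div k = x div k" "a mod k = y mod k" "b div k = y div k" "b mod k = x mod k"
      unfolding a_def b_def using k0 by (auto simp: cor_div cor_mod)
    have ab: "a < k*k" "b < k*k" unfolding a_def b_def using cor_lt[OF k0] xy by auto
    have ne1: "x \<noteq> y" using xy(3) by auto
    have ne2: "x \<noteq> a" using ad(2) xy(4) by auto
    have ne3: "x \<noteq> b" using ad(3) xy(3) by auto
    have ne4: "y \<noteq> a" using ad(1) xy(3) by auto
    have ne5: "y \<noteq> b" using ad(4) xy(4) by auto
    have ne6: "a \<noteq> b" using ad(1,3) xy(3) by auto
    have inV: "x \<in> V" "y \<in> V" "a \<in> V" "b \<in> V" using xy ab unfolding V_def by auto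
    have pn1: "\<pi> x \<noteq> \<pi> y" using inj_on_eq_iff[OF inj inV(1) inV(2)] ne1 by simp
    have pn2: "\<pi> x \<noteq> \<pi> a" using inj_on_eq_iff[OF inj inV(1) inV(3)] ne2 by simp
    have pn3: "\<pi> x \<noteq> \<pi> b" using inj_on_eq_iff[OF inj inV(1) inV(4)] ne3 by simp
    have pn4: "\<pi> y \<noteq> \<pi> a" using inj_on_eq_iff[OF inj inV(2) inV(3)] ne4 by simp
    have pn5: "\<pi> y \<noteq> \<pi> b" using inj_on_eq_iff[OF inj inV(2) inV(4)] ne5 by simp
    have pn6: "\<pi> a \<noteq> \<pi> b" using inj_on_eq_iff[OF inj inV(3) inV(4)] ne6 by simp
    have cc: "cor k a b = x" "cor k b a = y" unfolding a_def b_def using cor_cor1[OF k0] cor_cor2[OF k0] by auto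
    have "(\<pi> y < \<pi> x \<and> \<pi> y < \<pi> a \<and> \<pi> y < \<pi> b) \<or> (\<pi> x < \<pi> y \<and> \<pi> x < \<pi> a \<and> \<pi> x < \<pi> b) \<or>
          (\<pi> b < \<pi> a \<and> \<pi> b < \<pi> x \<and> \<pi> b < \<pi> y) \<or> (\<pi> a < \<pi> b \<and> \<pi> a < \<pi> x \<and> \<pi> a < \<pi> y)"
    proof -
      obtain m where m: "m \<in> {x,y,a,b}" "\<forall>z. z \<in> {x,y,a,b} \<longrightarrow> \<pi> m \<le> \<pi> z"
        using ex_has_least_nat[of "\<lambda>z. z \<in> {x,y,a,b}" x \<pi>] by auto
      have le: "\<pi> m \<le> \<pi> x" "\<pi> m \<le> \<pi> y" "\<pi> m \<le> \<pi> a" "\<pi> m \<le> \<pi> b" using m(2) by auto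
      from m(1) have "m = x \<or> m = y \<or> m = a \<or> m = b" by auto
      thus ?thesis
      proof (elim disjE)
        assume "m = x" thus ?thesis using le pn1 pn2 pn3 by auto
      next
        assume "m = y" thus ?thesis using le pn1 pn4 pn5 by auto
      next
        assume "m = a" thus ?thesis using le pn2 pn4 pn6 by auto
      next
        assume "m = b" thus ?thesis using le pn3 pn5 pn6 by auto
      qed
    qed
    thus "z \<in> Q \<union> sw ` Q \<union> dg ` Q \<union> (sw \<circ> dg) ` Q"
    proof (elim disjE)
      assume h: "\<pi> y < \<pi> x \<and> \<pi> y < \<pi> a \<and> \<pi> y < \<pi> b"
      hence "z \<in> Q" unfolding Q_def mem_Collect_eq case_prod_conv z a_def[symmetric] b_def[symmetric] using xy h by (metis (no_types, lifting))
      thus ?thesis by (intro UnI1)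
    next
      assume h: "\<pi> x < \<pi> y \<and> \<pi> x < \<pi> a \<and> \<pi> x < \<pi> b"
      hence "(y,x) \<in> Q" unfolding Q_def mem_Collect_eq case_prod_conv a_def[symmetric] b_def[symmetric] using xy h by (metis (no_types, lifting))
      moreover have "z = sw (y,x)" unfolding z sw_def by simp
      ultimately have "z \<in> sw ` Q" by (intro image_eqI)
      thus ?thesis by (intro UnI1 UnI2)
    next
      assume h: "\<pi> b < \<pi> a \<and> \<pi> b < \<pi> x \<and> \<pi> b < \<pi> y"
      hence "(a,b) \<in> Q" unfolding Q_def mem_Collect_eq case_prod_conv cc using ab ad xy h by (metis (no_types, lifting))
      moreover have "z = dg (a,b)" unfolding z dg_def using cc by simp
      ultimately have "z \<in> dg ` Q" by (intro image_eqI)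
      thus ?thesis by (intro UnI1 UnI2)
    next
      assume h: "\<pi> a < \<pi> b \<and> \<pi> a < \<pi> x \<and> \<pi> a < \<pi> y"
      hence "(b,a) \<in> Q" unfolding Q_def mem_Collect_eq case_prod_conv cc using ab ad xy h by (metis (no_types, lifting))
      moreover have "z = (sw \<circ> dg) (b,a)" unfolding z dg_def sw_def using cc by simp
      ultimately have "z \<in> (sw \<circ> dg) ` Q" by (intro image_eqI)
      thus ?thesis by (intro UnI2)
    qed
  qed
  have finP: "finite P" unfolding P_def
    by (rule finite_subset[of _ "{0..<k*k} \<times> {0..<k*k}"]) auto
  have "card P \<le> card (Q \<union> sw ` Q \<union> dg ` Q \<union> (sw \<circ> dg) ` Q)"
    using PQ finQ by (intro card_mono) auto
  also have "\<dots> \<le> 4 * card Q"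
  proof -
    have "card (Q \<union> sw ` Q \<union> dg ` Q \<union> (sw \<circ> dg) ` Q) \<le> card (Q \<union> sw ` Q \<union> dg ` Q) + card ((sw \<circ> dg) ` Q)"
      by (rule card_Un_le)
    moreover have "card (Q \<union> sw ` Q \<union> dg ` Q) \<le> card (Q \<union> sw ` Q) + card (dg ` Q)"
      by (rule card_Un_le)
    moreover have "card (Q \<union> sw ` Q) \<le> card Q + card (sw ` Q)"
      by (rule card_Un_le)
    ultimately show ?thesis
      using card_image_le[OF finQ, of sw] card_image_le[OF finQ, of dg] card_image_le[OF finQ, of "sw \<circ> dg"]
      by linarith
  qed
  finally have cP: "card P \<le> 4 * card Q" .
  define R where "R = (SIGMA a:{..<k}. {..<k} - {a})"
  have cR: "card R = k * (k-1)" unfolding R_def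
    by (subst card_SigmaI) auto
  define f :: "(nat \<times> nat) \<times> (nat \<times> nat) \<Rightarrow> nat \<times> nat" where
    "f = (\<lambda>((a,c),(b,d)). (a*k+b, c*k+d))"
  have injf: "inj_on f (R \<times> R)"
  proof (rule inj_onI)
    fix z1 z2 assume z1: "z1 \<in> R \<times> R" and z2: "z2 \<in> R \<times> R" and e: "f z1 = f z2"
    obtain a c b d where z1e: "z1 = ((a,c),(b,d))" and "b < k" "d < k" using z1 unfolding R_def by auto
    moreover obtain a' c' b' d' where z2e: "z2 = ((a',c'),(b',d'))" and "b' < k" "d' < k" using z2 unfolding R_def by auto
    ultimately have e1: "a*k+b = a'*k+b'" and e2: "c*k+d = c'*k+d'" using e unfolding f_def z1e z2e by auto
    have "a = a'" using enc_div[OF \<open>b<k\<close>, of a] enc_div[OF \<open>b'<k\<close>, of a'] e1 by simp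
    moreover have "b = b'" using enc_mod[OF \<open>b<k\<close>, of a] enc_mod[OF \<open>b'<k\<close>, of a'] e1 by simp
    moreover have "c = c'" using enc_div[OF \<open>d<k\<close>, of c] enc_div[OF \<open>d'<k\<close>, of c'] e2 by simp
    moreover have "d = d'" using enc_mod[OF \<open>d<k\<close>, of c] enc_mod[OF \<open>d'<k\<close>, of c'] e2 by simp
    ultimately show "z1 = z2" unfolding z1e z2e by simp
  qed
  have fP: "f ` (R \<times> R) \<subseteq> P"
  proof
    fix z assume "z \<in> f ` (R \<times> R)"
    then obtain a c b d where z: "z = (a*k+b, c*k+d)" and r: "a < k" "c < k" "a \<noteq> c" "b < k" "d < k" "b \<noteq> d"
      unfolding R_def f_def by auto
    show "z \<in> P" unfolding P_def z using r enc_lt enc_div enc_mod by simp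
  qed
  have "card (R \<times> R) \<le> card P" using card_inj_on_le[OF injf fP finP] .
  hence "(k*(k-1))^2 \<le> card P" using cR by (simp add: card_cartesian_product power2_eq_square)
  thus ?thesis using cP cQ by linarith
qed

lemma hhl_min_lower: assumes k: "2 \<le> k"
  shows "(k*(k-1))^2 \<le> 4 * min_hhl_size {0..<k*k} (rk k)"
proof -
  obtain L where L: "hub_labeling {0..<k*k} (rk k) L" "hierarchical {0..<k*k} L"
    using hhl_exists[of k] k by auto
  have "\<exists>s L. hub_labeling {0..<k*k} (rk k) L \<and> hierarchical {0..<k*k} L \<and> hl_size {0..<k*k} L = s"
    using L by blast
  hence "\<exists>L. hub_labeling {0..<k*k} (rk k) L \<and> hierarchical {0..<k*k} L \<and> hl_size {0..<k*k} L = min_hhl_size {0..<k*k} (rk k)"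
    unfolding min_hhl_size_def by (rule LeastI_ex)
  then obtain L' where "hub_labeling {0..<k*k} (rk k) L'" "hierarchical {0..<k*k} L'"
    "hl_size {0..<k*k} L' = min_hhl_size {0..<k*k} (rk k)" by blast
  thus ?thesis using hhl_lower[OF k] by metis
qed

theorem mainTheorem14:
  shows "\<exists>c::real. c > 0 \<and> (\<forall>N::nat. \<exists>n\<ge>N. \<exists>E :: nat \<Rightarrow> nat \<Rightarrow> bool.
           undirected_graph {0..<n} E \<and> connected_graph {0..<n} E \<and>
           real (min_hhl_size {0..<n} E) \<ge> c * sqrt (real n) * real (min_hl_size {0..<n} E))"
proof (intro exI[of _ "1/32"] conjI allI)
  show "(0::real) < 1/32" by simp
  fix N :: nat
  define m where "m = N"
  define k where "k = m + 2"
  have k2: "2 \<le> k" and k0: "0 < k" unfolding k_def by auto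
  define H where "H = min_hhl_size {0..<k*k} (rk k)"
  define G where "G = min_hl_size {0..<k*k} (rk k)"
  have hH: "((m+2)*(m+1))^2 \<le> 4 * H" using hhl_min_lower[OF k2] unfolding H_def k_def by simp
  have hG: "G \<le> (m+2)*(m+2)*(2*(m+2))" using min_hl_upper[OF k0] unfolding G_def k_def by simp
  have X: "(m+2)*(m+2) \<le> 4*((m+1)*(m+1))"
  proof -
    have "m+2 \<le> 2*(m+1)" by simp
    hence "(m+2)*(m+2) \<le> (2*(m+1))*(2*(m+1))" by (intro mult_le_mono)
    thus ?thesis by (simp add: algebra_simps)
  qed
  have "(m+2)*G \<le> (m+2)*((m+2)*(m+2)*(2*(m+2)))" using hG by (rule mult_le_mono2)
  also have "\<dots> = 2*((m+2)*(m+2))*((m+2)*(m+2))" by (simp add: algebra_simps)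
  also have "\<dots> \<le> 2*((m+2)*(m+2))*(4*((m+1)*(m+1)))" using X by (intro mult_le_mono2)
  also have "\<dots> = 8*(((m+2)*(m+1))^2)" by (simp add: algebra_simps power2_eq_square)
  also have "\<dots> \<le> 32 * H" using hH by linarith
  finally have nat_ineq: "k*G \<le> 32*H" unfolding k_def .
  hence "real (k*G) \<le> real (32*H)" by (simp only: of_nat_le_iff)
  hence r: "real k * real G \<le> 32 * real H" by simp
  have sq: "sqrt (real (k*k)) = real k" by simp
  show "\<exists>n\<ge>N. \<exists>E :: nat \<Rightarrow> nat \<Rightarrow> bool.
           undirected_graph {0..<n} E \<and> connected_graph {0..<n} E \<and>
           real (min_hhl_size {0..<n} E) \<ge> 1/32 * sqrt (real n) * real (min_hl_size {0..<n} E)"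
  proof (intro exI[of _ "k*k"] conjI exI[of _ "rk k"])
    show "N \<le> k*k" unfolding k_def m_def by (simp add: algebra_simps)
    show "undirected_graph {0..<k*k} (rk k)" unfolding undirected_graph_def rk_def by auto
    show "connected_graph {0..<k*k} (rk k)" unfolding connected_graph_def using rook_conn[OF k0] by auto
    show "1/32 * sqrt (real (k*k)) * real (min_hl_size {0..<k*k} (rk k)) \<le> real (min_hhl_size {0..<k*k} (rk k))"
      unfolding sq G_def[symmetric] H_def[symmetric] using r by simp
  qed
qed

end
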